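(* Let $\mathbb{X}=\ell_4^2$. For $((x,y),(x_1,y_1))\in S_{\mathbb{X}}\times S_{\mathbb{X}}$, the pair $((x,y),(x_1,y_1))$ is not a CPP if and only if $xy=0$ and $x_1y_1\neq0$.
   Context: $\ell_4^2$ is $\mathbb{R}^2$ with norm $\|(a,b)\|=(a^4+b^4)^{1/4}$; $S_{\mathbb{X}}$ its unit sphere. $B(u,r)=\{v:\|v-u\|<r\}$. $u\perp_B v$ means $\|u+\lambda v\|\ge\|u\|$ for all real $\lambda$; $u^\perp=\{v:u\perp_Bv\}$. For $u,v\in S_{\mathbb{X}}$, $(u,v)$ is a CPP if there exist $r>0,\mu>0$ such that for all $z\in u^\perp\cap S_{\mathbb{X}}$, all $w\in v^\perp\cap S_{\mathbb{X}}$ and all $a,b\in\mathbb{R}$, $au+bz\in B(u,r)\cap S_{\mathbb{X}}$ implies $\|av+b\mu w\|\le1$. *)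

theory Defs
  imports "HOL-Analysis.Analysis"
begin

definition l4norm :: "real \<times> real \<Rightarrow> real" where
  "l4norm p = root 4 ((fst p)^4 + (snd p)^4)"

definition l4sphere :: "(real \<times> real) set" where
  "l4sphere = {p. l4norm p = 1}"

definition l4ball :: "real \<times> real \<Rightarrow> real \<Rightarrow> (real \<times> real) set" where
  "l4ball u r = {v. l4norm (v - u) < r}"

definition bj_orth :: "real \<times> real \<Rightarrow> real \<times> real \<Rightarrow> bool" where
  "bj_orth u v \<longleftrightarrow> (\<forall>t::real. l4norm (u + t *\<^sub>R v) \<ge> l4norm u)"

definition orth_set :: "real \<times> real \<Rightarrow> (real \<times> real) set" where
  "orth_set u = {v. bj_orth u v}"

definition is_CPP :: "real \<times> real \<Rightarrow> real \<times> real \<Rightarrow> bool" where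
  "is_CPP u v \<longleftrightarrow> (\<exists>r>0. \<exists>\<mu>>0.
     \<forall>z \<in> orth_set u \<inter> l4sphere. \<forall>w \<in> orth_set v \<inter> l4sphere. \<forall>a b :: real.
       a *\<^sub>R u + b *\<^sub>R z \<in> l4ball u r \<inter> l4sphere \<longrightarrow>
       l4norm (a *\<^sub>R v + (b * \<mu>) *\<^sub>R w) \<le> 1)"

end

theory Submission
  imports Defs
begin

definition nq :: "real \<times> real \<Rightarrow> real" where
  "nq p = (fst p)^4 + (snd p)^4"

lemma nq_nonneg: "nq p \<ge> 0" unfolding nq_def by simp

lemma l4_le_iff: "l4norm p \<le> l4norm q \<longleftrightarrow> nq p \<le> nq q"
  unfolding l4norm_def nq_def by simp

lemma l4_sphere_iff: "p \<in> l4sphere \<longleftrightarrow> nq p = 1"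
proof -
  have "l4norm p = 1 \<longleftrightarrow> root 4 (nq p) = root 4 1" by (simp add: l4norm_def nq_def)
  then show ?thesis unfolding l4sphere_def by simp
qed

lemma l4_le1_iff: "l4norm p \<le> 1 \<longleftrightarrow> nq p \<le> 1"
proof -
  have "l4norm p \<le> 1 \<longleftrightarrow> root 4 (nq p) \<le> root 4 1" by (simp add: l4norm_def nq_def)
  then show ?thesis by simp
qed

lemma l4_less_iff: assumes "r > 0" shows "l4norm p < r \<longleftrightarrow> nq p < r^4"
proof -
  have "r = root 4 (r^4)" using assms by (simp add: real_root_power_cancel)
  then have "l4norm p < r \<longleftrightarrow> root 4 (nq p) < root 4 (r^4)" by (simp add: l4norm_def nq_def)
  then show ?thesis by simp
qed

lemma conv4: "(A + B)^4 \<ge> A^4 + 4*A^3*B" for A B :: real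
proof -
  have "(A + B)^4 - A^4 - 4*A^3*B = B^2 * (2*A^2 + (2*A+B)^2)" by algebra
  also have "\<dots> \<ge> 0" by simp
  finally show ?thesis by simp
qed

lemma orth_char:
  shows "bj_orth (x,y) (z1,z2) \<longleftrightarrow> x^3*z1 + y^3*z2 = 0"
proof
  assume h: "x^3*z1 + y^3*z2 = 0"
  show "bj_orth (x,y) (z1,z2)" unfolding bj_orth_def l4_le_iff
  proof
    fix t :: real
    have "nq ((x,y) + t *\<^sub>R (z1,z2)) = (x + t*z1)^4 + (y+t*z2)^4" by (simp add: nq_def)
    also have "\<dots> \<ge> (x^4 + 4*x^3*(t*z1)) + (y^4 + 4*y^3*(t*z2))"
      using conv4[of x "t*z1"] conv4[of y "t*z2"] by linarith
    also have "(x^4 + 4*x^3*(t*z1)) + (y^4 + 4*y^3*(t*z2)) = x^4+y^4 + 4*t*(x^3*z1 + y^3*z2)"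
      by (simp add: algebra_simps)
    finally show "nq (x, y) \<le> nq ((x, y) + t *\<^sub>R (z1, z2))" using h by (simp add: nq_def)
  qed
next
  assume o: "bj_orth (x,y) (z1,z2)"
  define f where "f t = (x + t*z1)^4 + (y+t*z2)^4" for t
  have fo: "f t \<ge> f 0" for t
    using o unfolding bj_orth_def l4_le_iff f_def by (simp add: nq_def)
  define g where "g = x^3*z1 + y^3*z2"
  have d: "DERIV f 0 :> 4*g"
    unfolding f_def g_def
    by (auto intro!: derivative_eq_intros simp: algebra_simps)
  show "x^3*z1 + y^3*z2 = 0"
  proof (rule ccontr)
    assume "x^3*z1 + y^3*z2 \<noteq> 0"
    then have "g > 0 \<or> g < 0" unfolding g_def by auto
    then show False
    proof
      assume "g > 0"
      then obtain d where "d > 0" "\<forall>h>0. h < d \<longrightarrow> f (0 - h) < f 0"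
        using DERIV_pos_inc_left[OF d] by auto
      then have "f (0 - d/2) < f 0" by auto
      then show False using fo by (metis not_le)
    next
      assume "g < 0"
      then obtain d where "d > 0" "\<forall>h>0. h < d \<longrightarrow> f (0 + h) < f 0"
        using DERIV_neg_dec_right[OF d] by auto
      then have "f (0 + d/2) < f 0" by auto
      then show False using fo by (metis not_le)
    qed
  qed
qed


lemma nq_expand:
  "nq (a *\<^sub>R (x,y) + t *\<^sub>R (p,q)) = a^4*(x^4+y^4) + 4*a^3*t*(x^3*p + y^3*q)
     + 6*a^2*t^2*(x^2*p^2+y^2*q^2) + 4*a*t^3*(x*p^3 + y*q^3) + t^4*(p^4+q^4)"
  by (simp add: nq_def algebra_simps power2_eq_square power3_eq_cube power4_eq_xxxx)

lemma abs_le1: "(x::real)^4 + y^4 = 1 \<Longrightarrow> \<bar>x\<bar> \<le> 1"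
proof (rule ccontr)
  assume h: "x^4 + y^4 = 1" "\<not> \<bar>x\<bar> \<le> 1"
  then have "1 < \<bar>x\<bar>^4" by (intro one_less_power) auto
  moreover have "\<bar>x\<bar>^4 = x^4" by (simp add: power_abs)
  moreover have "y^4 \<ge> 0" by simp
  ultimately show False using h by linarith
qed

lemma flat:
  assumes u: "x^4 + y^4 = 1" and xy: "x*y = 0"
    and z: "(z1,z2) \<in> orth_set (x,y) \<inter> l4sphere"
  shows "nq (a *\<^sub>R (x,y) + b *\<^sub>R (z1,z2)) = a^4 + b^4"
proof -
  have o: "x^3*z1 + y^3*z2 = 0" using z orth_char unfolding orth_set_def by auto
  have zs: "z1^4 + z2^4 = 1" using z l4_sphere_iff by (simp add: nq_def)
  show ?thesis
  proof (cases "x = 0")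
    case True
    then have "y^4 = 1" using u by simp
    then have "y \<noteq> 0" by auto
    then have "z2 = 0" using o True by simp
    then show ?thesis using True zs \<open>y^4 = 1\<close> by (simp add: nq_def power_mult_distrib)
  next
    case False
    then have "y = 0" using xy by simp
    then have "x^4 = 1" using u by simp
    then have "z1 = 0" using o False \<open>y = 0\<close> by simp
    then show ?thesis using \<open>y = 0\<close> zs \<open>x^4 = 1\<close> by (simp add: nq_def power_mult_distrib)
  qed
qed


lemma ineq1:
  fixes c d \<mu> t :: real
  assumes "c > 0" "c \<le> 1" "\<bar>d\<bar> \<le> 2" "\<mu> > 0" "t > 0" "t \<le> c/(8*\<mu>)" "t \<le> \<mu>*c"
  shows "6*c*(t*\<mu>)^2 + 4*d*(t*\<mu>)^3 + (t*\<mu>)^4 > t^4"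
proof -
  define S where "S = t*\<mu>"
  have Sp: "S > 0" using assms S_def by simp
  have tm: "t/\<mu> \<le> c" using assms by (simp add: divide_le_eq mult.commute)
  have tm0: "t/\<mu> \<ge> 0" using assms by simp
  have "(t/\<mu>)^2 \<le> c^2" using tm tm0 by (simp add: power_mono)
  also have "c^2 \<le> c" using assms by (simp add: power2_eq_square mult_le_cancel_left1)
  finally have q: "(t/\<mu>)^2 \<le> c" .
  have t4: "t^4 = S^2 * (t/\<mu>)^2" using assms unfolding S_def
    by (simp add: power2_eq_square power4_eq_xxxx field_simps)
  have "8*S \<le> c" using assms unfolding S_def by (simp add: le_divide_eq algebra_simps)
  then have A: "8*S^3 \<le> c*S^2"
    using mult_right_mono[of "8*S" c "S^2"] by (simp add: power2_eq_square power3_eq_cube algebra_simps)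
  have B: "4*d*S^3 \<ge> -8*S^3"
  proof -
    have "\<bar>4*d*S^3\<bar> \<le> 8*S^3" using assms Sp by (simp add: abs_mult mult_right_mono)
    then show ?thesis by (simp add: abs_le_iff)
  qed
  have C: "t^4 \<le> c*S^2" using q t4 mult_left_mono[of "(t/\<mu>)^2" c "S^2"] by (simp add: mult.commute)
  have D: "c*S^2 > 0" using Sp assms by simp
  have E: "S^4 \<ge> 0" by simp
  have "6*c*S^2 + 4*d*S^3 + S^4 = 6*(c*S^2) + 4*d*S^3 + S^4" by simp
  then have "6*c*S^2 + 4*d*S^3 + S^4 > t^4" using A B C D E by linarith
  then show ?thesis unfolding S_def .
qed


lemma prod_ball_eq: "a *\<^sub>R (x,y) + b *\<^sub>R (z1,z2) - (x,y) = (a-1) *\<^sub>R (x,y) + b *\<^sub>R (z1,z2)"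
  for a b x y z1 z2 :: real
  by (simp add: algebra_simps)

lemma sq_le_half: "(p::real)^2*q^2 \<le> (p^4+q^4)/2"
proof -
  have "0 \<le> (p^2 - q^2)^2" by simp
  then show ?thesis by (simp add: power2_eq_square power4_eq_xxxx algebra_simps)
qed

lemma notcpp:
  assumes u: "x^4+y^4=1" "x*y=0" and v: "x1^4+y1^4=1" "x1*y1 \<noteq> 0"
  shows "\<not> is_CPP (x,y) (x1,y1)"
proof
  assume "is_CPP (x,y) (x1,y1)"
  then obtain r \<mu> where r: "r>0" "\<mu>>0" and H: "\<forall>z\<in>orth_set (x,y) \<inter> l4sphere. \<forall>w\<in>orth_set (x1,y1) \<inter> l4sphere. \<forall>a b.
     a *\<^sub>R (x,y) + b *\<^sub>R z \<in> l4ball (x,y) r \<inter> l4sphere \<longrightarrow> l4norm (a *\<^sub>R (x1,y1) + (b*\<mu>) *\<^sub>R w) \<le> 1"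
    unfolding is_CPP_def by blast
  define z :: "real\<times>real" where "z = (if x = 0 then (1,0) else (0,1))"
  obtain z1 z2 where zz: "z = (z1,z2)" by (cases z)
  have zin: "(z1,z2) \<in> orth_set (x,y) \<inter> l4sphere"
    using u zz unfolding z_def orth_set_def by (auto simp: orth_char l4_sphere_iff nq_def split: if_splits)
  have x1n: "x1 \<noteq> 0" and y1n: "y1 \<noteq> 0" using v by auto
  define k where "k = root 4 (y1^12 + x1^12)"
  have kk: "y1^12 + x1^12 > 0" using x1n by (simp add: add_nonneg_pos)
  then have kpos: "k > 0" unfolding k_def by simp
  have k4: "k^4 = y1^12 + x1^12" unfolding k_def using kk by simp
  define w1 where "w1 = - (y1^3) / k"
  define w2 where "w2 = x1^3/k"
  have "w1^4 + w2^4 = (y1^12 + x1^12)/k^4"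
    unfolding w1_def w2_def by (simp add: power_divide add_divide_distrib flip: power_mult)
  then have ws: "w1^4 + w2^4 = 1" using k4 kk by simp
  have wo: "x1^3*w1 + y1^3*w2 = 0" unfolding w1_def w2_def by (simp add: field_simps)
  have win: "(w1,w2) \<in> orth_set (x1,y1) \<inter> l4sphere"
    using wo ws by (simp add: orth_set_def orth_char l4_sphere_iff nq_def)
  define c where "c = x1^2*w1^2 + y1^2*w2^2"
  have w1n: "w1 \<noteq> 0" unfolding w1_def using y1n kpos by simp
  have cpos: "c > 0" unfolding c_def using x1n w1n by (simp add: add_pos_nonneg)
  have cle: "c \<le> 1" unfolding c_def using sq_le_half[of x1 w1] sq_le_half[of y1 w2] v(1) ws by (simp add: field_simps)
  define d where "d = x1*w1^3 + y1*w2^3"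
  have b1: "\<bar>x1\<bar> \<le> 1" "\<bar>y1\<bar> \<le> 1" "\<bar>w1\<bar> \<le> 1" "\<bar>w2\<bar> \<le> 1"
    using abs_le1[of x1 y1] abs_le1[of y1 x1] abs_le1[of w1 w2] abs_le1[of w2 w1] v ws
    by (simp_all add: add.commute)
  have "\<bar>x1*w1^3\<bar> \<le> 1" using b1 by (simp add: abs_mult power_abs power_le_one mult_le_one)
  moreover have "\<bar>y1*w2^3\<bar> \<le> 1" using b1 by (simp add: abs_mult power_abs power_le_one mult_le_one)
  ultimately have dle: "\<bar>d\<bar> \<le> 2" unfolding d_def by linarith
  define t where "t = min (min 1 (r/2)) (min (c/(8*\<mu>)) (\<mu>*c))"
  have tpos: "t > 0" unfolding t_def using r cpos by simp
  have tb: "t \<le> 1" "t \<le> r/2" "t \<le> c/(8*\<mu>)" "t \<le> \<mu>*c" unfolding t_def by auto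
  define a where "a = 1 / root 4 (1 + t^4)"
  have t41: "1 + t^4 > 0" by (simp add: add_pos_nonneg)
  have rt: "root 4 (1 + t^4) > 0" using t41 by simp
  have apos: "a > 0" unfolding a_def using rt by simp
  have a4: "a^4 * (1 + t^4) = 1"
  proof -
    have "(root 4 (1 + t^4))^4 = 1 + t^4" using t41 by simp
    then show ?thesis unfolding a_def using t41 by (simp add: power_divide)
  qed
  have ale: "a \<le> 1"
  proof (rule ccontr)
    assume "\<not> a \<le> 1"
    then have "1 < a^4" by (intro one_less_power) auto
    moreover have "1 \<le> 1 + t^4" by simp
    moreover have "a^4 * 1 \<le> a^4 * (1+t^4)" by (rule mult_left_mono) auto
    ultimately have "1 < a^4 * (1+t^4)" by simp
    then show False using a4 by simp
  qed
  define b where "b = a*t"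
  have sph: "a *\<^sub>R (x,y) + b *\<^sub>R (z1,z2) \<in> l4sphere"
    using flat[OF u zin, of a b] a4 unfolding l4_sphere_iff b_def
    by (simp add: power_mult_distrib algebra_simps)
  have "1 - a \<le> 1 - a^4"
  proof -
    have "a^4 \<le> a" using apos ale by (simp add: power_le_one power_decreasing[of 1 4 a, simplified])
    then show ?thesis by simp
  qed
  also have "1 - a^4 = a^4 * t^4" using a4 by (simp add: algebra_simps)
  also have "\<dots> \<le> t^4" using apos ale by (simp add: power_le_one mult_left_le_one_le)
  also have "\<dots> \<le> t" using tpos tb by (simp add: power_le_one power_decreasing[of 1 4 t, simplified])
  finally have am: "1 - a \<le> t" .
  have "(a - 1)^4 \<le> t^4"
  proof -
    have "\<bar>a-1\<bar> \<le> t" using am ale by simp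
    then show ?thesis using power_mono[of "\<bar>a-1\<bar>" t 4] by simp
  qed
  moreover have "b^4 \<le> t^4" unfolding b_def using apos ale tpos
    by (simp add: power_mult_distrib power_le_one mult_left_le_one_le)
  moreover have "2*t^4 < r^4"
  proof -
    have "t^4 \<le> (r/2)^4" using tb tpos by (simp add: power_mono)
    then have "t^4 * 16 \<le> r^4" by (simp add: power_divide)
    moreover have "r^4 > 0" using r by simp
    moreover have "t^4 \<ge> 0" by simp
    ultimately show ?thesis by linarith
  qed
  ultimately have "nq ((a-1) *\<^sub>R (x,y) + b *\<^sub>R (z1,z2)) < r^4"
    using flat[OF u zin, of "a-1" b] by simp
  then have "l4norm (a *\<^sub>R (x,y) + b *\<^sub>R (z1,z2) - (x,y)) < r"
    unfolding prod_ball_eq using l4_less_iff[OF r(1)] by blast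
  then have ball: "a *\<^sub>R (x,y) + b *\<^sub>R (z1,z2) \<in> l4ball (x,y) r"
    unfolding l4ball_def mem_Collect_eq .
  have "l4norm (a *\<^sub>R (x1,y1) + (b*\<mu>) *\<^sub>R (w1,w2)) \<le> 1"
    using H zin win sph ball by blast
  then have le1: "nq (a *\<^sub>R (x1,y1) + (b*\<mu>) *\<^sub>R (w1,w2)) \<le> 1" using l4_le1_iff by simp
  have "nq (a *\<^sub>R (x1,y1) + (b*\<mu>) *\<^sub>R (w1,w2)) =
        a^4 * (1 + (6*c*(t*\<mu>)^2 + 4*d*(t*\<mu>)^3 + (t*\<mu>)^4))"
    unfolding nq_expand using v ws wo unfolding c_def d_def b_def
    by (simp add: algebra_simps power_mult_distrib power2_eq_square power3_eq_cube power4_eq_xxxx)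
  also have "\<dots> > a^4 * (1 + t^4)"
    using ineq1[OF cpos cle dle r(2) tpos tb(3) tb(4)] apos by simp
  finally show False using a4 le1 by simp
qed

lemma ineq2:
  fixes a b \<delta> Cu Du Cv Dv \<mu> :: real
  assumes d0: "\<delta> > 0" and d1: "\<delta> \<le> 1" and bb: "\<bar>b\<bar> \<le> \<delta>/4 * \<bar>a\<bar>"
    and cv: "0 \<le> Cv" "Cv \<le> 1" and dv: "\<bar>Dv\<bar> \<le> 2" and du: "\<bar>Du\<bar> \<le> 2" and cu: "Cu \<ge> \<delta>"
    and mu: "\<mu> = \<delta>/3"
  shows "6*a^2*(b*\<mu>)^2*Cv + 4*a*(b*\<mu>)^3*Dv + (b*\<mu>)^4 \<le> 6*a^2*b^2*Cu + 4*a*b^3*Du + b^4"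
proof -
  define A where "A = \<bar>a\<bar>"
  define B where "B = \<bar>b\<bar>"
  have A0: "A \<ge> 0" and B0: "B \<ge> 0" unfolding A_def B_def by auto
  have P: "a^2*b^2 = A^2*B^2" unfolding A_def B_def by simp
  have m0: "\<mu> > 0" and m1: "\<mu> \<le> 1" using mu d0 d1 by auto
  have BA: "B \<le> \<delta>/4 * A" using bb unfolding A_def B_def .
  have "\<delta>*A \<le> 1*A" using d1 A0 by (rule mult_right_mono)
  then have BA4: "B \<le> A/4" using BA by simp
  have AB3: "A*B^3 \<le> \<delta>/4 * (A^2*B^2)"
  proof -
    have "A*B^3 = (A*B^2)*B" by (simp add: power2_eq_square power3_eq_cube)
    also have "\<dots> \<le> (A*B^2)*(\<delta>/4 * A)" using BA A0 B0 by (intro mult_left_mono) auto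
    also have "\<dots> = \<delta>/4 * (A^2*B^2)" by (simp add: power2_eq_square)
    finally show ?thesis .
  qed
  have r1: "4*a*b^3*Du \<ge> -8*(A*B^3)"
  proof -
    have "\<bar>4*a*b^3*Du\<bar> = 4*(A*B^3)*\<bar>Du\<bar>" unfolding A_def B_def by (simp add: abs_mult power_abs)
    also have "\<dots> \<le> 4*(A*B^3)*2" using du A0 B0 by (intro mult_left_mono) auto
    finally have h: "\<bar>4*a*b^3*Du\<bar> \<le> 4*(A*B^3)*2" .
    show ?thesis using abs_le_D2[OF h] by linarith
  qed
  have r2: "6*a^2*b^2*Cu \<ge> 6*\<delta>*(A^2*B^2)"
  proof -
    have "\<delta>*(A^2*B^2) \<le> Cu*(A^2*B^2)" using cu by (intro mult_right_mono) auto
    then show ?thesis using P by (simp add: algebra_simps)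
  qed
  have r3: "b^4 \<ge> 0" by simp
  have RHS: "6*a^2*b^2*Cu + 4*a*b^3*Du + b^4 \<ge> 4*\<delta>*(A^2*B^2)" using r1 r2 r3 AB3 by linarith
  have l1: "6*a^2*(b*\<mu>)^2*Cv \<le> 6*(A^2*B^2)*\<mu>^2"
  proof -
    have "6*a^2*(b*\<mu>)^2*Cv = 6*(A^2*B^2)*\<mu>^2*Cv" using P by (simp add: power_mult_distrib algebra_simps)
    also have "\<dots> \<le> 6*(A^2*B^2)*\<mu>^2*1" using cv by (intro mult_left_mono) auto
    finally show ?thesis by simp
  qed
  have l2: "4*a*(b*\<mu>)^3*Dv \<le> 2*(A^2*B^2)*\<mu>^2"
  proof -
    have "4*a*(b*\<mu>)^3*Dv \<le> \<bar>4*a*(b*\<mu>)^3*Dv\<bar>" by simp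
    also have "\<dots> = 4*(A*B^3)*\<mu>^3*\<bar>Dv\<bar>" unfolding A_def B_def using m0
      by (simp add: abs_mult power_abs power_mult_distrib)
    also have "\<dots> \<le> 4*(A*B^3)*\<mu>^3*2" using dv A0 B0 m0 by (intro mult_left_mono) auto
    also have "\<mu>^3 \<le> \<mu>^2" using m0 m1 by (simp add: power_decreasing)
    then have "4*(A*B^3)*\<mu>^3*2 \<le> 4*(A*B^3)*\<mu>^2*2" using A0 B0 by (intro mult_left_mono mult_right_mono) auto
    also have "\<delta>*(A^2*B^2) \<le> 1*(A^2*B^2)" using d1 by (intro mult_right_mono) auto
    then have "A*B^3 \<le> (A^2*B^2)/4" using AB3 by simp
    then have "4*(A*B^3)*\<mu>^2*2 \<le> 4*((A^2*B^2)/4)*\<mu>^2*2" using m0 by (intro mult_left_mono mult_right_mono) auto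
    finally show ?thesis by simp
  qed
  have l3: "(b*\<mu>)^4 \<le> (A^2*B^2)*\<mu>^2"
  proof -
    have "B^2 \<le> A^2" using BA4 B0 A0 by (simp add: power_mono)
    moreover have "\<mu>^2 \<le> 1" using m0 m1 by (simp add: power_le_one)
    ultimately have "B^2*\<mu>^2 \<le> A^2*1" by (intro mult_mono) auto
    then have le: "(B^2*\<mu>^2)*(B^2*\<mu>^2) \<le> (B^2*\<mu>^2)*(A^2*1)" by (intro mult_left_mono) auto
    have "(b*\<mu>)^4 = (B^2*\<mu>^2)*(B^2*\<mu>^2)" unfolding B_def
      by (simp add: power_mult_distrib power4_eq_xxxx power2_eq_square)
    also have "\<dots> \<le> (B^2*\<mu>^2)*(A^2*1)" by (rule le)
    also have "\<dots> = (A^2*B^2)*\<mu>^2" by (simp add: algebra_simps)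
    finally show ?thesis .
  qed
  have "9*(A^2*B^2)*\<mu>^2 = (A^2*B^2)*\<delta>^2" unfolding mu by (simp add: power_divide)
  also have "\<dots> \<le> (A^2*B^2)*\<delta>" using d0 d1 by (intro mult_left_mono) (auto simp: power2_eq_square)
  finally have "9*(A^2*B^2)*\<mu>^2 \<le> (A^2*B^2)*\<delta>" .
  moreover have "(A^2*B^2)*\<delta> \<ge> 0" using d0 by simp
  ultimately show ?thesis using l1 l2 l3 RHS by (simp add: algebra_simps)
qed

lemma pow4_less: "(r::real) > 0 \<Longrightarrow> X^4 < r^4 \<Longrightarrow> \<bar>X\<bar> < r"
proof (rule ccontr)
  assume "r > 0" "X^4 < r^4" "\<not> \<bar>X\<bar> < r"
  then have "r^4 \<le> \<bar>X\<bar>^4" by (intro power_mono) auto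
  then show False using \<open>X^4 < r^4\<close> by simp
qed

lemma cpp_flat:
  assumes u: "x^4+y^4=1" "x*y=0" and v: "x1^4+y1^4=1" "x1*y1 = 0"
  shows "is_CPP (x,y) (x1,y1)"
proof -
  have H: "\<forall>z\<in>orth_set (x,y) \<inter> l4sphere. \<forall>w\<in>orth_set (x1,y1) \<inter> l4sphere. \<forall>a b::real.
     a *\<^sub>R (x,y) + b *\<^sub>R z \<in> l4ball (x,y) 1 \<inter> l4sphere \<longrightarrow> l4norm (a *\<^sub>R (x1,y1) + (b*1) *\<^sub>R w) \<le> 1"
  proof (intro ballI allI impI)
    fix z w and a b :: real
    assume z: "z \<in> orth_set (x,y) \<inter> l4sphere" and w: "w \<in> orth_set (x1,y1) \<inter> l4sphere"
      and p: "a *\<^sub>R (x,y) + b *\<^sub>R z \<in> l4ball (x,y) 1 \<inter> l4sphere"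
    obtain z1 z2 where zz: "z = (z1,z2)" by (cases z)
    obtain w1 w2 where ww: "w = (w1,w2)" by (cases w)
    have "nq (a *\<^sub>R (x,y) + b *\<^sub>R z) = 1" using p l4_sphere_iff by auto
    then have "a^4 + b^4 = 1" using flat[OF u, of z1 z2 a b] z zz by simp
    moreover have "nq (a *\<^sub>R (x1,y1) + (b*1) *\<^sub>R w) = a^4 + b^4"
      using flat[OF v, of w1 w2 a "b*1"] w ww by simp
    ultimately show "l4norm (a *\<^sub>R (x1,y1) + (b*1) *\<^sub>R w) \<le> 1" using l4_le1_iff by simp
  qed
  show ?thesis unfolding is_CPP_def using H zero_less_one by blast
qed

lemma cpp_curved:
  assumes u: "x^4+y^4=1" "x*y \<noteq> 0" and v: "x1^4+y1^4=1"
  shows "is_CPP (x,y) (x1,y1)"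
proof -
  define \<delta> where "\<delta> = x^4*y^12/2"
  have xn: "x \<noteq> 0" and yn: "y \<noteq> 0" using u by auto
  have d0: "\<delta> > 0" unfolding \<delta>_def using xn yn by simp
  have bx: "\<bar>x\<bar> \<le> 1" "\<bar>y\<bar> \<le> 1" using abs_le1[of x y] abs_le1[of y x] u by (simp_all add: add.commute)
  have x4: "x^4 \<le> 1" "y^12 \<le> 1" using power_le_one[of "\<bar>x\<bar>" 4] power_le_one[of "\<bar>y\<bar>" 12] bx by simp_all
  have d1: "\<delta> \<le> 1"
  proof -
    have "x^4*y^12 \<le> 1*1" using x4 by (intro mult_mono) auto
    then show ?thesis unfolding \<delta>_def by simp
  qed
  define r where "r = \<delta>/24"
  define \<mu> where "\<mu> = \<delta>/3"
  have r0: "r > 0" and m0: "\<mu> > 0" unfolding r_def \<mu>_def using d0 by auto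
  have H: "\<forall>z\<in>orth_set (x,y) \<inter> l4sphere. \<forall>w\<in>orth_set (x1,y1) \<inter> l4sphere. \<forall>a b::real.
     a *\<^sub>R (x,y) + b *\<^sub>R z \<in> l4ball (x,y) r \<inter> l4sphere \<longrightarrow> l4norm (a *\<^sub>R (x1,y1) + (b*\<mu>) *\<^sub>R w) \<le> 1"
  proof (intro ballI allI impI)
    fix z w and a b :: real
    assume z: "z \<in> orth_set (x,y) \<inter> l4sphere" and w: "w \<in> orth_set (x1,y1) \<inter> l4sphere"
      and p: "a *\<^sub>R (x,y) + b *\<^sub>R z \<in> l4ball (x,y) r \<inter> l4sphere"
    obtain z1 z2 where zz: "z = (z1,z2)" by (cases z)
    obtain w1 w2 where ww: "w = (w1,w2)" by (cases w)
    have Lu: "x^3*z1 + y^3*z2 = 0" using z zz orth_char unfolding orth_set_def by auto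
    have Lv: "x1^3*w1 + y1^3*w2 = 0" using w ww orth_char unfolding orth_set_def by auto
    have zs: "z1^4+z2^4 = 1" using z zz l4_sphere_iff by (simp add: nq_def)
    have ws: "w1^4+w2^4 = 1" using w ww l4_sphere_iff by (simp add: nq_def)
    have bz: "\<bar>z1\<bar> \<le> 1" "\<bar>z2\<bar> \<le> 1" using abs_le1[of z1 z2] abs_le1[of z2 z1] zs by (simp_all add: add.commute)
    have bw: "\<bar>w1\<bar> \<le> 1" "\<bar>w2\<bar> \<le> 1" using abs_le1[of w1 w2] abs_le1[of w2 w1] ws by (simp_all add: add.commute)
    have bv: "\<bar>x1\<bar> \<le> 1" "\<bar>y1\<bar> \<le> 1" using abs_le1[of x1 y1] abs_le1[of y1 x1] v by (simp_all add: add.commute)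
    define Cu where "Cu = x^2*z1^2 + y^2*z2^2"
    define Du where "Du = x*z1^3 + y*z2^3"
    define Cv where "Cv = x1^2*w1^2 + y1^2*w2^2"
    define Dv where "Dv = x1*w1^3 + y1*w2^3"
    have cv: "0 \<le> Cv" "Cv \<le> 1" unfolding Cv_def
      using sq_le_half[of x1 w1] sq_le_half[of y1 w2] v ws by (simp_all add: field_simps)
    have "\<bar>x*z1^3\<bar> \<le> 1" using bx bz by (simp add: abs_mult power_abs power_le_one mult_le_one)
    moreover have "\<bar>y*z2^3\<bar> \<le> 1" using bx bz by (simp add: abs_mult power_abs power_le_one mult_le_one)
    ultimately have du: "\<bar>Du\<bar> \<le> 2" unfolding Du_def by linarith
    have "\<bar>x1*w1^3\<bar> \<le> 1" using bv bw by (simp add: abs_mult power_abs power_le_one mult_le_one)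
    moreover have "\<bar>y1*w2^3\<bar> \<le> 1" using bv bw by (simp add: abs_mult power_abs power_le_one mult_le_one)
    ultimately have dv: "\<bar>Dv\<bar> \<le> 2" unfolding Dv_def by linarith
    have cu: "Cu \<ge> \<delta>"
    proof -
      have e1: "x^12*z1^4 = y^12*z2^4"
      proof -
        have "x^3*z1 = -(y^3*z2)" using Lu by simp
        then have "(x^3*z1)^4 = (y^3*z2)^4" by simp
        then show ?thesis by (simp add: power_mult_distrib flip: power_mult)
      qed
      have e2: "x^4*z1^4*(x^12+y^12) = x^4*y^12"
      proof -
        have "x^4*z1^4*(x^12+y^12) = x^4*(x^12*z1^4) + x^4*y^12*z1^4" by (simp add: algebra_simps)
        also have "\<dots> = x^4*y^12*(z1^4+z2^4)" using e1 by (simp add: algebra_simps)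
        finally show ?thesis using zs by simp
      qed
      have x12: "x^12 \<le> 1" using power_le_one[of "\<bar>x\<bar>" 12] bx by simp
      have s2: "x^12 + y^12 \<le> 2" using x12 x4 by simp
      have "x^4*y^12 \<le> x^4*z1^4*2"
      proof -
        have "x^4*z1^4 \<ge> 0" by simp
        then have "x^4*z1^4*(x^12+y^12) \<le> x^4*z1^4*2" using s2 by (intro mult_left_mono) auto
        then show ?thesis using e2 by simp
      qed
      then have h1: "\<delta> \<le> x^4*z1^4" unfolding \<delta>_def by simp
      have q0: "0 \<le> x^2*z1^2" by simp
      have q1: "x^2*z1^2 \<le> 1"
      proof -
        have "x^2 \<le> 1" "z1^2 \<le> 1" using bx bz by (simp_all add: abs_square_le_1)
        then show ?thesis by (intro mult_le_one) auto
      qed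
      have "x^4*z1^4 = (x^2*z1^2)*(x^2*z1^2)" by (simp add: power4_eq_xxxx power2_eq_square)
      also have "\<dots> \<le> (x^2*z1^2)*1" using q0 q1 by (intro mult_left_mono) auto
      finally have "x^4*z1^4 \<le> x^2*z1^2" by simp
      moreover have "y^2*z2^2 \<ge> 0" by simp
      ultimately show ?thesis using h1 unfolding Cu_def by linarith
    qed
    have sph: "nq (a *\<^sub>R (x,y) + b *\<^sub>R (z1,z2)) = 1" using p zz l4_sphere_iff by auto
    then have eq1: "a^4 + 6*a^2*b^2*Cu + 4*a*b^3*Du + b^4 = 1"
      unfolding nq_expand u(1) zs Lu Cu_def[symmetric] Du_def[symmetric] by simp
    have "l4norm (a *\<^sub>R (x,y) + b *\<^sub>R (z1,z2) - (x,y)) < r" using p zz unfolding l4ball_def by auto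
    then have "l4norm ((a-1) *\<^sub>R (x,y) + b *\<^sub>R (z1,z2)) < r" unfolding prod_ball_eq .
    then have nb: "((a-1)*x + b*z1)^4 + ((a-1)*y + b*z2)^4 < r^4"
      using l4_less_iff[OF r0] by (simp add: nq_def)
    have "((a-1)*x + b*z1)^4 + ((a-1)*y + b*z2)^4 \<ge>
          (((a-1)*x)^4 + 4*((a-1)*x)^3*(b*z1)) + (((a-1)*y)^4 + 4*((a-1)*y)^3*(b*z2))"
      using conv4[of "(a-1)*x" "b*z1"] conv4[of "(a-1)*y" "b*z2"] by linarith
    also have "(((a-1)*x)^4 + 4*((a-1)*x)^3*(b*z1)) + (((a-1)*y)^4 + 4*((a-1)*y)^3*(b*z2))
        = (a-1)^4*(x^4+y^4) + 4*(a-1)^3*b*(x^3*z1+y^3*z2)"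
      by (simp only: power_mult_distrib) (simp add: algebra_simps)
    finally have "(a-1)^4 \<le> ((a-1)*x + b*z1)^4 + ((a-1)*y + b*z2)^4" using u Lu by simp
    then have am: "\<bar>a-1\<bar> < r" using pow4_less[OF r0] nb by simp
    have n1: "((a-1)*x + b*z1)^4 \<ge> 0" "((a-1)*y + b*z2)^4 \<ge> 0" by simp_all
    have q1: "\<bar>(a-1)*x + b*z1\<bar> < r"
      using n1 nb by (intro pow4_less[OF r0]) linarith
    have q2: "\<bar>(a-1)*y + b*z2\<bar> < r"
      using n1 nb by (intro pow4_less[OF r0]) linarith
    have "\<bar>(a-1)*x\<bar> \<le> \<bar>a-1\<bar>" using bx by (simp add: abs_mult mult_left_le)
    then have bz1: "\<bar>b*z1\<bar> < 2*r" using q1 am by linarith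
    have "\<bar>(a-1)*y\<bar> \<le> \<bar>a-1\<bar>" using bx by (simp add: abs_mult mult_left_le)
    then have bz2: "\<bar>b*z2\<bar> < 2*r" using q2 am by linarith
    have "\<bar>b*z1\<bar>^4 < (2*r)^4" using bz1 by (intro power_strict_mono) auto
    then have "(b*z1)^4 < (2*r)^4" by simp
    moreover have "\<bar>b*z2\<bar>^4 < (2*r)^4" using bz2 by (intro power_strict_mono) auto
    then have "(b*z2)^4 < (2*r)^4" by simp
    moreover have "b^4 = (b*z1)^4 + (b*z2)^4" using zs by (simp add: power_mult_distrib algebra_simps flip: distrib_left)
    moreover have "(2*r)^4 = 16*r^4" by simp
    ultimately have b32: "b^4 < 32*r^4" by linarith
    have "(3*r)^4 = 81*r^4" by simp
    moreover have "r^4 > 0" using r0 by simp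
    ultimately have "b^4 < (3*r)^4" using b32 by linarith
    then have bsm: "\<bar>b\<bar> < 3*r" using r0 by (intro pow4_less) auto
    have ah: "\<bar>a\<bar> > 1/2" using am d1 unfolding r_def by linarith
    have "\<delta>/4 * (1/2) \<le> \<delta>/4 * \<bar>a\<bar>" using ah d0 by (intro mult_left_mono) auto
    then have bb: "\<bar>b\<bar> \<le> \<delta>/4 * \<bar>a\<bar>" using bsm unfolding r_def by linarith
    have key: "6*a^2*(b*\<mu>)^2*Cv + 4*a*(b*\<mu>)^3*Dv + (b*\<mu>)^4 \<le> 6*a^2*b^2*Cu + 4*a*b^3*Du + b^4"
      by (rule ineq2[OF d0 d1 bb cv dv du cu \<mu>_def])
    have "nq (a *\<^sub>R (x1,y1) + (b*\<mu>) *\<^sub>R (w1,w2)) = a^4 + (6*a^2*(b*\<mu>)^2*Cv + 4*a*(b*\<mu>)^3*Dv + (b*\<mu>)^4)"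
      unfolding nq_expand v ws Lv Cv_def[symmetric] Dv_def[symmetric] by simp
    also have "\<dots> \<le> 1" using key eq1 by linarith
    finally show "l4norm (a *\<^sub>R (x1,y1) + (b*\<mu>) *\<^sub>R w) \<le> 1" using ww l4_le1_iff by simp
  qed
  show ?thesis unfolding is_CPP_def using H r0 m0 by blast
qed

theorem mainTheorem11:
  fixes x y x1 y1 :: real
  assumes "(x, y) \<in> l4sphere" and "(x1, y1) \<in> l4sphere"
  shows "\<not> is_CPP (x, y) (x1, y1) \<longleftrightarrow> (x * y = 0 \<and> x1 * y1 \<noteq> 0)"
proof -
  have u: "x^4 + y^4 = 1" using assms(1) l4_sphere_iff by (simp add: nq_def)
  have v: "x1^4 + y1^4 = 1" using assms(2) l4_sphere_iff by (simp add: nq_def)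
  show ?thesis
  proof (cases "x * y = 0")
    case True
    show ?thesis
    proof (cases "x1 * y1 = 0")
      case True2: True
      then show ?thesis using cpp_flat[OF u True v True2] by simp
    next
      case False
      then show ?thesis using notcpp[OF u True v False] True by simp
    qed
  next
    case False
    then show ?thesis using cpp_curved[OF u False v] by simp
  qed
qed

end
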